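(* Fix an integer $m\ge1$ and let $\omega=\omega(n)\to\infty$ with $\omega\le\log n$. There is a sequence $\varepsilon_n\to0$ such that with probability $1-o(1)$, $$B_i\le \varepsilon_n\,\frac{W_i}{\log n}\qquad\text{for all integers } i \text{ with } \log^3n\le i\le n.$$
   Context: $\xi_1,\dots,\xi_{mn+1}$ are independent mean-one exponential random variables, $\Upsilon_N=\xi_1+\dots+\xi_N$, $W_i=(\Upsilon_{mi}/\Upsilon_{mn+1})^{1/2}$, and $\eta_v=\xi_{(v-1)m+1}+\dots+\xi_{vm}$ for $v\in[n]$. Let $\lambda_0=\log^{-4/m}n$. For $v\in[n]$ put $X_v=\dfrac{\lambda_0\,\mathbf 1_{\{\eta_v\le\lambda_0\}}}{2m(vn)^{1/2}}$ and $B_i=\sum_{v=\lceil\omega\rceil}^{i}X_v$. *)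

theory Defs
  imports "HOL-Probability.Probability"
begin

definition Ups :: "(nat \<Rightarrow> 'a \<Rightarrow> real) \<Rightarrow> nat \<Rightarrow> 'a \<Rightarrow> real" where
  "Ups \<xi> N x = (\<Sum>j = 1..N. \<xi> j x)"

definition Wv :: "nat \<Rightarrow> nat \<Rightarrow> (nat \<Rightarrow> 'a \<Rightarrow> real) \<Rightarrow> nat \<Rightarrow> 'a \<Rightarrow> real" where
  "Wv m n \<xi> i x = sqrt (Ups \<xi> (m * i) x / Ups \<xi> (m * n + 1) x)"

definition eta :: "nat \<Rightarrow> (nat \<Rightarrow> 'a \<Rightarrow> real) \<Rightarrow> nat \<Rightarrow> 'a \<Rightarrow> real" where
  "eta m \<xi> v x = (\<Sum>j = (v - 1) * m + 1..v * m. \<xi> j x)"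

definition lam0 :: "nat \<Rightarrow> nat \<Rightarrow> real" where
  "lam0 m n = ln (real n) powr (- 4 / real m)"

definition Xv :: "nat \<Rightarrow> nat \<Rightarrow> (nat \<Rightarrow> 'a \<Rightarrow> real) \<Rightarrow> nat \<Rightarrow> 'a \<Rightarrow> real" where
  "Xv m n \<xi> v x = lam0 m n * (if eta m \<xi> v x \<le> lam0 m n then 1 else 0)
      / (2 * real m * sqrt (real v * real n))"

definition Bv :: "nat \<Rightarrow> nat \<Rightarrow> real \<Rightarrow> (nat \<Rightarrow> 'a \<Rightarrow> real) \<Rightarrow> nat \<Rightarrow> 'a \<Rightarrow> real" where
  "Bv m n w \<xi> i x = (\<Sum>v = nat \<lceil>w\<rceil>..i. Xv m n \<xi> v x)"

end

theory Submission
  imports Defs "HOL-Analysis.Harmonic_Numbers" "HOL-Real_Asymp.Real_Asymp"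
begin


lemma (in prob_space) Ups_distr:
  assumes ind: "indep_vars (\<lambda>_. borel) \<xi> UNIV"
    and ex: "\<And>k. distributed M lborel (\<xi> k) (exponential_density 1)"
    and N: "N \<ge> 1"
  shows "distributed M lborel (Ups \<xi> N) (erlang_density (N - 1) 1)"
proof -
  have "distributed M lborel (\<lambda>x. \<Sum>i\<in>{1..N}. \<xi> i x) (erlang_density (card {1..N} - 1) 1)"
    by (rule exponential_distributed_sum) (use N ex in \<open>auto intro: indep_vars_subset[OF ind]\<close>)
  then show ?thesis by (simp add: Ups_def[abs_def])
qed

lemma (in prob_space) eta_distr:
  assumes ind: "indep_vars (\<lambda>_. borel) \<xi> UNIV"
    and ex: "\<And>k. distributed M lborel (\<xi> k) (exponential_density 1)"
    and m: "m \<ge> 1" and v: "v \<ge> 1"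
  shows "distributed M lborel (eta m \<xi> v) (erlang_density (m - 1) 1)"
proof -
  have c: "card {(v - 1) * m + 1..v * m} = m"
  proof -
    have "v * m = (v - 1) * m + m" using v by (cases v) auto
    then show ?thesis by simp
  qed
  have "distributed M lborel (\<lambda>x. \<Sum>i\<in>{(v - 1) * m + 1..v * m}. \<xi> i x)
       (erlang_density (card {(v - 1) * m + 1..v * m} - 1) 1)"
    by (rule exponential_distributed_sum) (use c m ex in \<open>auto intro: indep_vars_subset[OF ind]\<close>)
  then show ?thesis unfolding c by (simp add: eta_def[abs_def])
qed

lemma (in prob_space) erlang_cheb:
  assumes D: "distributed M lborel X (erlang_density k 1)" and a: "a > 0"
  shows "prob {x\<in>space M. a \<le> \<bar>X x - (real k + 1)\<bar>} \<le> (real k + 1) / a\<^sup>2"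
proof -
  have m: "random_variable borel X" using distributed_measurable[OF D] by simp
  have i2: "integrable M (\<lambda>x. X x ^ 2)" using erlang_ith_moment_integrable[OF _ D, of 2] by simp
  have e: "expectation X = k + 1" using erlang_ith_moment[OF _ D, of 1] by simp
  have v: "variance X = k + 1" using erlang_distributed_variance[OF _ D] by simp
  show ?thesis using Chebyshev_inequality[OF m i2 a] e v by (simp add: add.commute)
qed

lemma erlang_CDF_le:
  assumes "lam \<ge> 0" "m \<ge> 1"
  shows "erlang_CDF (m - 1) 1 lam \<le> lam ^ m"
proof -
  obtain t where t: "\<bar>t\<bar> \<le> \<bar>lam\<bar>" "exp lam = (\<Sum>n<m. lam ^ n / fact n) + (exp t / fact m) * lam ^ m"
    using Maclaurin_exp_le[of lam m] by blast
  have s: "{..m - 1} = {..<m}" using assms by auto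
  have "erlang_CDF (m - 1) 1 lam = 1 - (\<Sum>n<m. lam ^ n * exp (- lam) / fact n)"
    using assms s by (simp add: erlang_CDF_def)
  also have "(\<Sum>n<m. lam ^ n * exp (- lam) / fact n) = exp (-lam) * (\<Sum>n<m. lam ^ n / fact n)"
    by (simp add: sum_distrib_left field_simps)
  also have "(\<Sum>n<m. lam ^ n / fact n) = exp lam - (exp t / fact m) * lam ^ m" using t(2) by linarith
  also have "1 - exp (-lam) * (exp lam - (exp t / fact m) * lam ^ m) = exp (-lam) * exp t / fact m * lam ^ m"
    by (simp add: algebra_simps exp_minus_inverse)
  also have "\<dots> \<le> 1 * lam ^ m"
  proof (rule mult_right_mono)
    have "t \<le> lam" using t(1) assms(1) by linarith
    have e: "exp (-lam) * exp t = exp (t - lam)" by (simp add: exp_diff exp_minus field_simps)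
    have e1: "exp (t - lam) \<le> 1" using \<open>t \<le> lam\<close> by simp
    have "exp (t - lam) / fact m \<le> 1 / 1"
      by (rule frac_le) (use e1 in auto)
    then show "exp (-lam) * exp t / fact m \<le> 1" unfolding e by simp
  qed (use assms in simp)
  finally show ?thesis by simp
qed

lemma (in prob_space) eta_prob:
  assumes ind: "indep_vars (\<lambda>_. borel) \<xi> UNIV"
    and ex: "\<And>k. distributed M lborel (\<xi> k) (exponential_density 1)"
    and m: "m \<ge> 1" and v: "v \<ge> 1" and lam: "lam \<ge> 0"
  shows "prob {x\<in>space M. eta m \<xi> v x \<le> lam} \<le> lam ^ m"
  using erlang_distributed_le[OF eta_distr[OF ind ex m v] _ lam] erlang_CDF_le[OF lam m] by simp

lemma (in prob_space) xi_nonneg: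
  fixes \<xi> :: "nat \<Rightarrow> 'a \<Rightarrow> real"
  assumes ex: "\<And>k. distributed M lborel (\<xi> k) (exponential_density 1)"
  shows "AE x in M. \<forall>k. 0 \<le> \<xi> k x"
proof -
  show ?thesis
  proof (rule AE_all_countable[THEN iffD2], intro allI)
    fix k show "AE x in M. 0 \<le> \<xi> k x"
      by (subst distributed_AE2[OF ex]) (auto simp: erlang_density_def)
  qed
qed



lemma geo_bound:
  fixes K :: "nat set" and a :: real
  assumes fin: "finite K" and a: "a > 0" and h: "\<And>k. k \<in> K \<Longrightarrow> a \<le> 2 ^ k"
  shows "(\<Sum>k\<in>K. 1 / 2 ^ k) \<le> 2 / a"
proof (cases "K = {}")
  case True then show ?thesis using a by simp
next
  case False
  define k0 where "k0 = Min K"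
  define k1 where "k1 = Max K"
  have sub: "K \<subseteq> {k0..<k0 + (k1 - k0 + 1)}"
  proof
    fix x assume "x \<in> K"
    then have "k0 \<le> x" "x \<le> k1" using fin by (auto simp: k0_def k1_def)
    then show "x \<in> {k0..<k0 + (k1 - k0 + 1)}" by auto
  qed
  have geo: "(\<Sum>k\<in>{k0..<k0 + N}. (1/2::real) ^ k) = 2 * (1/2) ^ k0 - 2 * (1/2) ^ (k0 + N)" for N
    by (induction N) (auto simp: field_simps power_add)
  have "(\<Sum>k\<in>K. 1 / 2 ^ k) = (\<Sum>k\<in>K. (1/2::real) ^ k)" by (simp add: power_one_over)
  also have "\<dots> \<le> (\<Sum>k\<in>{k0..<k0 + (k1 - k0 + 1)}. (1/2::real) ^ k)"
    by (rule sum_mono2) (use sub in auto)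
  also have "\<dots> \<le> 2 * (1/2) ^ k0" unfolding geo by simp
  also have "(1/2::real) ^ k0 \<le> 1 / a"
  proof -
    have "k0 \<in> K" using fin False by (simp add: k0_def)
    then have "a \<le> 2 ^ k0" by (rule h)
    then show ?thesis using a by (simp add: power_one_over field_simps)
  qed
  finally show ?thesis by simp
qed

lemma term_bound:
  fixes lam m v i n :: real
  assumes "0 \<le> lam" "lam \<le> 1" "1 \<le> m" "1 \<le> v" "v \<le> i" "1 \<le> n"
  shows "lam / (2 * m * sqrt (v * n)) \<le> sqrt (i / n) / 2 * (1 / v)"
proof -
  have sv: "sqrt v > 0" "sqrt n > 0" using assms by auto
  have "lam / (2 * m * sqrt (v * n)) \<le> 1 / (2 * sqrt v * sqrt n)"
  proof -
    have "lam / (2 * m * sqrt (v * n)) = (lam / m) * (1 / (2 * sqrt v * sqrt n))"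
      by (simp add: real_sqrt_mult)
    also have "\<dots> \<le> 1 * (1 / (2 * sqrt v * sqrt n))"
      by (rule mult_right_mono) (use assms sv in auto)
    finally show ?thesis by simp
  qed
  also have "\<dots> \<le> sqrt i / (2 * sqrt n * v)"
  proof -
    have "sqrt v \<le> sqrt i" using assms by simp
    then have "sqrt v * sqrt v \<le> sqrt i * sqrt v" using sv by (intro mult_right_mono) auto
    then have "v \<le> sqrt i * sqrt v" using assms by simp
    then show ?thesis using sv assms by (simp add: field_simps)
  qed
  also have "\<dots> = sqrt (i / n) / 2 * (1 / v)" by (simp add: real_sqrt_divide)
  finally show ?thesis .
qed

context prob_space begin

lemma meas_Ups[measurable]:
  assumes [measurable]: "\<And>k. \<xi> k \<in> borel_measurable M"
  shows "Ups \<xi> N \<in> borel_measurable M"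
  unfolding Ups_def[abs_def] by measurable

lemma meas_eta[measurable]:
  assumes [measurable]: "\<And>k. \<xi> k \<in> borel_measurable M"
  shows "eta m \<xi> v \<in> borel_measurable M"
  unfolding eta_def[abs_def] by measurable

lemma meas_Bv[measurable]:
  assumes [measurable]: "\<And>k. \<xi> k \<in> borel_measurable M"
  shows "Bv m n w \<xi> i \<in> borel_measurable M"
  unfolding Bv_def[abs_def] Xv_def[abs_def] by measurable

lemma meas_Wv[measurable]:
  assumes [measurable]: "\<And>k. \<xi> k \<in> borel_measurable M"
  shows "Wv m n \<xi> i \<in> borel_measurable M"
  unfolding Wv_def[abs_def] by measurable

lemma meas_S:
  assumes [measurable]: "\<And>k. \<xi> k \<in> borel_measurable M"
  shows "{x \<in> space M. \<forall>i::nat. ln (real n) ^ 3 \<le> real i \<and> i \<le> n \<longrightarrow>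
        Bv m n w \<xi> i x \<le> e * Wv m n \<xi> i x / ln (real n)} \<in> sets M"
  by measurable


lemma main_n:
  fixes \<xi> :: "nat \<Rightarrow> 'a \<Rightarrow> real"
  assumes ind: "indep_vars (\<lambda>_. borel) \<xi> UNIV"
    and ex: "\<And>k. distributed M lborel (\<xi> k) (exponential_density 1)"
    and m: "m \<ge> 1" and l1: "1 \<le> ln (real n)"
  shows "1 - (1 / (real n + 1) + 16 / ln (real n) ^ 3 + (1 + ln (real n)) / ln (real n) ^ 2)
     \<le> prob {x \<in> space M. \<forall>i::nat. ln (real n) ^ 3 \<le> real i \<and> i \<le> n \<longrightarrow>
        Bv m n w \<xi> i x \<le> 2 / ln (real n) * Wv m n \<xi> i x / ln (real n)}"
proof -
  have meas[measurable]: "\<And>k. \<xi> k \<in> borel_measurable M"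
    using distributed_measurable[OF ex] by simp
  define l where "l = ln (real n)"
  have l1: "1 \<le> l" using l1 by (simp add: l_def)
  have n1: "n \<ge> 1" using l1 l_def by (cases n) auto
  define L where "L = l ^ 3"
  have L1: "1 \<le> L" unfolding L_def using l1 by simp
  define lam where "lam = lam0 m n"
  have lam_nn: "0 \<le> lam" by (simp add: lam_def lam0_def)
  have lam_le: "lam \<le> 1"
  proof -
    have "l powr (- 4 / real m) \<le> l powr 0" by (rule powr_mono) (use l1 in auto)
    then show ?thesis using l1 by (simp add: lam_def lam0_def l_def)
  qed
  have lam_m: "lam ^ m = 1 / l ^ 4"
  proof -
    have "lam ^ m = l powr (real m * (- 4 / real m))"
      unfolding lam_def lam0_def l_def[symmetric] using l1 by (subst powr_power) auto
    also have "\<dots> = l powr (- 4)" using m by simp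
    also have "\<dots> = 1 / l ^ 4" using l1 by (simp add: powr_minus field_simps)
    finally show ?thesis .
  qed
  define \<delta> where "\<delta> = 1 / l ^ 2"
  have \<delta>pos: "\<delta> > 0" using l1 by (simp add: \<delta>_def)
  define K where "K = {k::nat. L / 2 \<le> 2 ^ k \<and> 2 ^ k \<le> n}"
  have finK: "finite K"
  proof (rule finite_subset)
    show "K \<subseteq> {..n}"
    proof
      fix k assume "k \<in> K"
      then have "2 ^ k \<le> n" by (simp add: K_def)
      moreover have "k < 2 ^ k" by (rule less_exp)
      ultimately have "k \<le> n" by linarith
      then show "k \<in> {..n}" by simp
    qed
  qed simp
  define Zf where "Zf x = (\<Sum>v\<le>n. indicator {x\<in>space M. eta m \<xi> v x \<le> lam} x / real v)" for x
  have [measurable]: "Zf \<in> borel_measurable M" unfolding Zf_def by measurable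
  define E0 where "E0 = {x\<in>space M. \<exists>k. \<xi> k x < 0}"
  define E1 where "E1 = {x\<in>space M. real (m*n+1) \<le> \<bar>Ups \<xi> (m*n+1) x - real (m*n+1)\<bar>}"
  define E2 where "E2 k = {x\<in>space M. real (m*2^k) / 2 \<le> \<bar>Ups \<xi> (m*2^k) x - real (m*2^k)\<bar>}" for k
  define E3 where "E3 = {x\<in>space M. \<delta> \<le> Zf x}"
  define S where "S = {x \<in> space M. \<forall>i::nat. ln (real n) ^ 3 \<le> real i \<and> i \<le> n \<longrightarrow>
        Bv m n w \<xi> i x \<le> 2 / ln (real n) * Wv m n \<xi> i x / ln (real n)}"
  have [measurable]: "E0 \<in> sets M" unfolding E0_def by measurable
  have [measurable]: "E3 \<in> sets M" unfolding E3_def by measurable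
  have UpsM[measurable]: "\<And>N. Ups \<xi> N \<in> borel_measurable M" by (rule meas_Ups[OF meas])
  have [measurable]: "E1 \<in> sets M" unfolding E1_def by measurable
  have [measurable]: "\<And>k. E2 k \<in> sets M" unfolding E2_def by measurable
  have UE2: "(\<Union>k\<in>K. E2 k) \<in> sets M" using finK by auto
  have Sm: "S \<in> sets M" unfolding S_def by (rule meas_S) simp
  have inc: "space M - S \<subseteq> E0 \<union> E1 \<union> (\<Union>k\<in>K. E2 k) \<union> E3"
  proof
    fix x assume xS: "x \<in> space M - S"
    show "x \<in> E0 \<union> E1 \<union> (\<Union>k\<in>K. E2 k) \<union> E3"
    proof (rule ccontr)
      assume nx: "x \<notin> E0 \<union> E1 \<union> (\<Union>k\<in>K. E2 k) \<union> E3"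
      have xs: "x \<in> space M" using xS by simp
      have nn: "\<And>k. 0 \<le> \<xi> k x" using nx xs by (auto simp: E0_def not_less)
      have u1: "Ups \<xi> (m*n+1) x < 2 * real (m*n+1)"
      proof -
        have "\<not> real (m*n+1) \<le> \<bar>Ups \<xi> (m*n+1) x - real (m*n+1)\<bar>" using nx xs by (simp add: E1_def)
        then show ?thesis by (simp add: not_le abs_less_iff)
      qed
      have u2: "real (m*2^k) / 2 < Ups \<xi> (m*2^k) x" if "k \<in> K" for k
      proof -
        have "\<not> real (m*2^k) / 2 \<le> \<bar>Ups \<xi> (m*2^k) x - real (m*2^k)\<bar>" using nx xs that by (auto simp: E2_def)
        then show ?thesis using abs_ge_minus_self[of "Ups \<xi> (m*2^k) x - real (m*2^k)"] by linarith
      qed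
      have z: "Zf x < \<delta>" using nx xs by (auto simp: E3_def)
      have mono: "Ups \<xi> a x \<le> Ups \<xi> b x" if "a \<le> b" for a b
        unfolding Ups_def by (rule sum_mono2) (use nn that in auto)
      have "x \<in> S"
        unfolding S_def
      proof (intro CollectI conjI allI impI xs)
        fix i :: nat assume hi: "ln (real n) ^ 3 \<le> real i \<and> i \<le> n"
        have iL: "L \<le> real i" and iN: "i \<le> n" using hi by (auto simp: L_def l_def)
        have i1: "i \<ge> 1" using iL L1 by linarith
        obtain k where k1: "2^k \<le> i" and k2: "i < 2^(k+1)" using ex_power_ivl1[of 2 i] i1 by auto
        have k2r: "real i < 2 * 2 ^ k" using k2 by (metis of_nat_less_iff of_nat_numeral of_nat_power power_Suc Suc_eq_plus1 of_nat_mult)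
        have kK: "k \<in> K" unfolding K_def using k1 iN iL k2r by auto
        have mi: "m * 2^k \<le> m * i" using k1 by simp
        have Ui: "real m * real i / 4 < Ups \<xi> (m*i) x"
        proof -
          have "real m * real i / 4 \<le> real (m*2^k) / 2" using k2r m by simp
          also have "\<dots> < Ups \<xi> (m*2^k) x" by (rule u2[OF kK])
          also have "\<dots> \<le> Ups \<xi> (m*i) x" by (rule mono[OF mi])
          finally show ?thesis .
        qed
        have Un: "Ups \<xi> (m*i) x \<le> Ups \<xi> (m*n+1) x" by (rule mono) (use mult_le_mono2[OF iN, of m] in linarith)
        have mipos: "real m * real i / 4 > 0" using m i1 by simp
        define c where "c = sqrt (real i / real n) / 2"
        have cnn: "0 \<le> c" by (simp add: c_def)
        have W: "sqrt (real i / real n) / 4 \<le> Wv m n \<xi> i x"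
        proof -
          have r1: "(real m * real i / 4) / (2 * real (m*n+1)) \<le> Ups \<xi> (m*i) x / Ups \<xi> (m*n+1) x"
            by (rule frac_le) (use Ui Un u1 mipos in linarith)+
          have r2: "(real m * real i / 4) / (4 * (real m * real n)) \<le> (real m * real i / 4) / (2 * real (m*n+1))"
          proof (rule frac_le)
            have "(1::nat) \<le> m * n" using mult_le_mono[OF m n1] by simp
            then have "1 \<le> real m * real n" by (metis of_nat_1 of_nat_le_iff of_nat_mult)
            then show "2 * real (m*n+1) \<le> 4 * (real m * real n)" by simp
          qed (use mipos in \<open>auto intro!: add_pos_nonneg\<close>)
          have r3: "(real m * real i / 4) / (4 * (real m * real n)) = (real i / real n) / 16"
            using m n1 by (simp add: field_simps)
          have "sqrt ((real i / real n) / 16) \<le> Wv m n \<xi> i x"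
            unfolding Wv_def using r1 r2 r3 by simp
          moreover have "sqrt ((real i / real n) / 16) = sqrt (real i / real n) / 4"
            by (simp add: real_sqrt_divide real_sqrt_mult)
          ultimately show ?thesis by simp
        qed
        have B: "Bv m n w \<xi> i x \<le> c * Zf x"
        proof -
          have tb: "Xv m n \<xi> v x \<le> c * (indicator {x\<in>space M. eta m \<xi> v x \<le> lam} x / real v)"
            if "v \<le> i" for v
          proof (cases "v = 0")
            case True then show ?thesis by (simp add: Xv_def)
          next
            case False
            show ?thesis
            proof (cases "eta m \<xi> v x \<le> lam")
              case True
              have "lam / (2 * real m * sqrt (real v * real n)) \<le> sqrt (real i / real n) / 2 * (1 / real v)"
                by (rule term_bound) (use lam_nn lam_le m False that n1 in auto)
              then show ?thesis using True xs by (simp add: Xv_def lam_def[symmetric] c_def)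
            next
              case False then show ?thesis by (simp add: Xv_def lam_def[symmetric] xs)
            qed
          qed
          have "Bv m n w \<xi> i x = (\<Sum>v = nat \<lceil>w\<rceil>..i. Xv m n \<xi> v x)" by (simp add: Bv_def)
          also have "\<dots> \<le> (\<Sum>v = nat \<lceil>w\<rceil>..i. c * (indicator {x\<in>space M. eta m \<xi> v x \<le> lam} x / real v))"
            by (rule sum_mono) (use tb in auto)
          also have "\<dots> \<le> (\<Sum>v\<le>n. c * (indicator {x\<in>space M. eta m \<xi> v x \<le> lam} x / real v))"
            by (rule sum_mono2) (use iN cnn in auto)
          also have "\<dots> = c * Zf x" by (simp add: Zf_def sum_distrib_left)
          finally show ?thesis .
        qed
        have "Bv m n w \<xi> i x \<le> c * \<delta>" using B z cnn by (meson less_imp_le mult_left_mono order_trans)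
        also have "c * \<delta> = 2 / l * (sqrt (real i / real n) / 4) / l" using l1 by (simp add: c_def \<delta>_def field_simps power2_eq_square)
        also have "\<dots> \<le> 2 / l * Wv m n \<xi> i x / l" using W l1 by (intro divide_right_mono mult_left_mono) auto
        finally show "Bv m n w \<xi> i x \<le> 2 / ln (real n) * Wv m n \<xi> i x / ln (real n)" by (simp add: l_def)
      qed
      with xS show False by simp
    qed
  qed
  have P0: "prob E0 = 0"
  proof -
    have "emeasure M E0 = 0"
      using AE_iff_measurable[of E0 M "\<lambda>x. \<forall>k. 0 \<le> \<xi> k x"] xi_nonneg[OF ex]
      by (auto simp: E0_def not_le)
    then show ?thesis by (simp add: measure_def)
  qed
  have P1: "prob E1 \<le> 1 / (real n + 1)"
  proof -
    have D: "distributed M lborel (Ups \<xi> (m*n+1)) (erlang_density (m*n) 1)"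
      using Ups_distr[OF ind ex, of "m*n+1"] by simp
    have a: "real (m*n+1) > 0" by (simp only: of_nat_0_less_iff)
    have "prob E1 = prob {x\<in>space M. real (m*n+1) \<le> \<bar>Ups \<xi> (m*n+1) x - (real (m*n)+1)\<bar>}"
      unfolding E1_def by (simp add: add.commute)
    also have "\<dots> \<le> (real (m*n) + 1) / (real (m*n+1))\<^sup>2" by (rule erlang_cheb[OF D a])
    also have "\<dots> = 1 / real (m*n+1)"
    proof -
      have e: "real (m*n) + 1 = real (m*n+1)" by simp
      show ?thesis unfolding e using a by (simp add: power2_eq_square divide_simps)
    qed
    also have "\<dots> \<le> 1 / (real n + 1)"
    proof (rule divide_left_mono)
      have "n \<le> m * n" using m by simp
      then show "real n + 1 \<le> real (m*n+1)" by (simp only: of_nat_add of_nat_le_iff of_nat_1 add_le_cancel_right)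
    qed (use n1 in \<open>auto intro!: mult_pos_pos add_pos_nonneg\<close>)
    finally show ?thesis .
  qed
  have P2: "prob (\<Union>k\<in>K. E2 k) \<le> 16 / L"
  proof -
    have b: "prob (E2 k) \<le> 4 * (1 / 2 ^ k)" for k
    proof -
      define N where "N = m * 2 ^ k"
      have N1: "N \<ge> 1" using m by (simp add: N_def)
      have D: "distributed M lborel (Ups \<xi> N) (erlang_density (N - 1) 1)"
        using Ups_distr[OF ind ex N1] .
      have a: "real N / 2 > 0" using N1 by simp
      have eq: "real (N - 1) + 1 = real N" using N1 by simp
      have "prob (E2 k) = prob {x\<in>space M. real N / 2 \<le> \<bar>Ups \<xi> N x - (real (N - 1) + 1)\<bar>}"
        unfolding E2_def N_def[symmetric] eq by simp
      also have "\<dots> \<le> (real (N - 1) + 1) / (real N / 2)\<^sup>2" by (rule erlang_cheb[OF D a])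
      also have "\<dots> = 4 / real N" unfolding eq using N1 by (simp add: power2_eq_square field_simps)
      also have "\<dots> \<le> 4 / 2 ^ k"
      proof (rule divide_left_mono)
        have "2 ^ k \<le> N" using m by (simp add: N_def)
        then show "(2::real) ^ k \<le> real N" by (metis of_nat_le_iff of_nat_numeral of_nat_power)
      qed (use N1 in \<open>auto intro!: mult_pos_pos\<close>)
      finally show ?thesis by simp
    qed
    have "prob (\<Union>k\<in>K. E2 k) \<le> (\<Sum>k\<in>K. prob (E2 k))"
      by (rule measure_UNION_le[OF finK]) auto
    also have "\<dots> \<le> (\<Sum>k\<in>K. 4 * (1 / 2 ^ k))" by (rule sum_mono) (rule b)
    also have "\<dots> = 4 * (\<Sum>k\<in>K. 1 / 2 ^ k)" by (simp add: sum_distrib_left)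
    also have "\<dots> \<le> 4 * (2 / (L / 2))"
      by (rule mult_left_mono, rule geo_bound[OF finK]) (use L1 in \<open>auto simp: K_def\<close>)
    also have "\<dots> = 16 / L" by simp
    finally show ?thesis .
  qed
  have P3: "prob E3 \<le> (1 + l) / l ^ 2"
  proof -
    have etaM[measurable]: "\<And>v. eta m \<xi> v \<in> borel_measurable M" by (rule meas_eta[OF meas])
    define A where "A v = {x\<in>space M. eta m \<xi> v x \<le> lam}" for v
    have Am[measurable]: "A v \<in> sets M" for v unfolding A_def by measurable
    have Zf_eq: "Zf = (\<lambda>x. \<Sum>v\<le>n. indicator (A v) x / real v)" by (simp add: Zf_def A_def fun_eq_iff)
    have int: "integrable M (\<lambda>x. indicator (A v) x / real v)" for v
      by (intro integrable_divide_zero integrable_real_indicator) (auto simp: emeasure_eq_measure)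
    have intZ: "integrable M Zf" unfolding Zf_eq by (intro Bochner_Integration.integrable_sum int)
    have nn: "AE x in M. 0 \<le> Zf x" by (auto simp: Zf_def intro!: sum_nonneg)
    have mk: "prob E3 \<le> (\<integral>x. Zf x \<partial>M) / \<delta>"
      unfolding E3_def by (rule integral_Markov_inequality_measure[OF intZ sets.top nn \<delta>pos])
    have iz: "(\<integral>x. Zf x \<partial>M) = (\<Sum>v\<le>n. prob (A v) / real v)"
    proof -
      have "(\<integral>x. Zf x \<partial>M) = (\<Sum>v\<le>n. (\<integral>x. indicator (A v) x / real v \<partial>M))"
        unfolding Zf_eq by (rule Bochner_Integration.integral_sum) (rule int)
      also have "\<dots> = (\<Sum>v\<le>n. prob (A v) / real v)"
      proof (rule sum.cong[OF refl])
        fix v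
        have "A v \<inter> space M = A v" using sets.sets_into_space[OF Am] by blast
        then show "(\<integral>x. indicator (A v) x / real v \<partial>M) = prob (A v) / real v"
          by (simp add: integral_divide_zero)
      qed
      finally show ?thesis .
    qed
    have sb: "(\<Sum>v\<le>n. prob (A v) / real v) \<le> (\<Sum>v\<le>n. lam ^ m / real v)"
    proof (rule sum_mono)
      fix v assume "v \<in> {..n}"
      show "prob (A v) / real v \<le> lam ^ m / real v"
      proof (cases "v = 0")
        case True then show ?thesis by simp
      next
        case False
        then have "prob (A v) \<le> lam ^ m"
          unfolding A_def by (intro eta_prob[OF ind ex m _ lam_nn]) simp
        then show ?thesis by (rule divide_right_mono) simp
      qed
    qed
    have hs: "(\<Sum>v\<le>n. lam ^ m / real v) = lam ^ m * harm n"
    proof -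
      have e: "{..n} = insert 0 {1..n}" by auto
      show ?thesis unfolding e harm_def
        by (simp add: sum_distrib_left divide_inverse)
    qed
    have hn: "harm n \<le> 1 + l"
      using euler_mascheroni_sequence_decreasing[of 1 n] n1 by (simp add: l_def harm_def)
    have "prob E3 \<le> lam ^ m * harm n / \<delta>" using mk iz sb hs by (simp add: divide_right_mono \<delta>pos less_imp_le order.trans)
    also have "\<dots> \<le> (1 / l ^ 4) * (1 + l) / \<delta>"
      unfolding lam_m using hn \<delta>pos l1 by (intro divide_right_mono mult_left_mono) auto
    also have "\<dots> = (1 + l) / l ^ 2" using l1 unfolding \<delta>_def by (simp add: field_simps power_add[symmetric])
    finally show ?thesis .
  qed
  have "prob (space M - S) \<le> prob (E0 \<union> E1 \<union> (\<Union>k\<in>K. E2 k) \<union> E3)"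
    by (rule finite_measure_mono[OF inc]) (use UE2 in auto)
  also have "\<dots> \<le> prob (E0 \<union> E1 \<union> (\<Union>k\<in>K. E2 k)) + prob E3"
    by (rule measure_Un_le) (use UE2 in auto)
  also have "prob (E0 \<union> E1 \<union> (\<Union>k\<in>K. E2 k)) \<le> prob (E0 \<union> E1) + prob (\<Union>k\<in>K. E2 k)"
    by (rule measure_Un_le) (use UE2 in auto)
  also have "prob (E0 \<union> E1) \<le> prob E0 + prob E1"
    by (rule measure_Un_le) auto
  finally have "prob (space M - S) \<le> 1 / (real n + 1) + 16 / L + (1 + l) / l ^ 2"
    using P0 P1 P2 P3 by linarith
  then show ?thesis using prob_compl[OF Sm] unfolding S_def[symmetric] L_def l_def by linarith
qed

end

theorem lemma3:
  fixes M :: "'a measure" and \<xi> :: "nat \<Rightarrow> 'a \<Rightarrow> real"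
    and m :: nat and \<omega> :: "nat \<Rightarrow> real"
  assumes "prob_space M"
    and "prob_space.indep_vars M (\<lambda>_. borel) \<xi> UNIV"
    and "\<And>k. distributed M lborel (\<xi> k) (exponential_density 1)"
    and "m \<ge> 1"
    and "filterlim \<omega> at_top sequentially"
    and "\<And>n. \<omega> n \<le> ln (real n)"
  shows "\<exists>\<epsilon> :: nat \<Rightarrow> real. \<epsilon> \<longlonglongrightarrow> 0 \<and>
    (\<lambda>n. measure M {x \<in> space M. \<forall>i::nat. ln (real n) ^ 3 \<le> real i \<and> i \<le> n \<longrightarrow>
        Bv m n (\<omega> n) \<xi> i x \<le> \<epsilon> n * Wv m n \<xi> i x / ln (real n)}) \<longlonglongrightarrow> 1"
proof -
  interpret prob_space M by (rule assms(1))
  have e0: "(\<lambda>n. 2 / ln (real n)) \<longlonglongrightarrow> 0" by real_asymp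
  have ev: "eventually (\<lambda>n. 1 \<le> ln (real n)) sequentially" by real_asymp
  have lim1: "(\<lambda>n. 1 - (1 / (real n + 1) + 16 / ln (real n) ^ 3 + (1 + ln (real n)) / ln (real n) ^ 2)) \<longlonglongrightarrow> 1"
    by real_asymp
  let ?P = "\<lambda>n. measure M {x \<in> space M. \<forall>i::nat. ln (real n) ^ 3 \<le> real i \<and> i \<le> n \<longrightarrow>
        Bv m n (\<omega> n) \<xi> i x \<le> 2 / ln (real n) * Wv m n \<xi> i x / ln (real n)}"
  have "?P \<longlonglongrightarrow> 1"
  proof (rule tendsto_sandwich[OF _ _ lim1 tendsto_const])
    show "eventually (\<lambda>n. 1 - (1 / (real n + 1) + 16 / ln (real n) ^ 3 + (1 + ln (real n)) / ln (real n) ^ 2) \<le> ?P n) sequentially"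
      using ev by eventually_elim (rule main_n[OF assms(2) assms(3) assms(4)])
    show "eventually (\<lambda>n. ?P n \<le> 1) sequentially" by simp
  qed
  then show ?thesis using e0 by blast
qed

end
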